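(* Consider MPI ranks that invoke collective communication through a wrapper which first calls a trivial barrier (MPI\_Barrier() over the participating ranks) and then makes the original MPI collective communication call. For a given invocation of such a wrapper, at any moment one of the following four cases holds: (a) some MPI rank is in the collective communication call, and all other ranks are either in the call or have exited it; (b) some MPI rank is in the collective communication call, no rank has exited it, and every other rank has at least entered the trivial barrier (and possibly proceeded further); (c) some MPI rank is in the trivial barrier and no other rank has exited it (though some may not yet have entered the trivial barrier); (d) either no MPI rank has entered the trivial barrier, or all MPI ranks have exited the MPI collective communication call.
   Context: Events are ordered by Lamport's happens-before relation. Barrier axiom (assumed, applied to the trivial barrier and to the collective call viewed as a synchronization among all participants): for a given invocation of an MPI barrier, it never happens that a rank A exits the barrier before (under happens-before) another participating rank B enters that barrier. *)

theory Defs
  imports Main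
begin

(* Every participating rank r performs four events, each occurring at a time
   stamp in a linearly ordered time type 't:
     eb r  : r enters the trivial barrier
     xb r  : r exits  the trivial barrier
     ec r  : r enters the collective call
     xc r  : r exits  the collective call
   A "moment" is a time t; an event e has occurred at moment t iff e <= t. *)

definition happens_before :: "'t::linorder \<Rightarrow> 't \<Rightarrow> bool" where
  "happens_before e1 e2 \<longleftrightarrow> e1 < e2"

definition entered_barrier :: "('r \<Rightarrow> 't::linorder) \<Rightarrow> 't \<Rightarrow> 'r \<Rightarrow> bool" where
  "entered_barrier eb t r \<longleftrightarrow> eb r \<le> t"

definition exited_barrier :: "('r \<Rightarrow> 't::linorder) \<Rightarrow> 't \<Rightarrow> 'r \<Rightarrow> bool" where
  "exited_barrier xb t r \<longleftrightarrow> xb r \<le> t"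

definition in_barrier :: "('r \<Rightarrow> 't::linorder) \<Rightarrow> ('r \<Rightarrow> 't) \<Rightarrow> 't \<Rightarrow> 'r \<Rightarrow> bool" where
  "in_barrier eb xb t r \<longleftrightarrow> eb r \<le> t \<and> t < xb r"

(* After leaving the trivial barrier the wrapper proceeds directly into the
   collective call; the rank counts as being "in the collective call" from
   the moment it exits the barrier until it exits the collective call. *)
definition in_collective :: "('r \<Rightarrow> 't::linorder) \<Rightarrow> ('r \<Rightarrow> 't) \<Rightarrow> 't \<Rightarrow> 'r \<Rightarrow> bool" where
  "in_collective xb xc t r \<longleftrightarrow> xb r \<le> t \<and> t < xc r"

definition exited_collective :: "('r \<Rightarrow> 't::linorder) \<Rightarrow> 't \<Rightarrow> 'r \<Rightarrow> bool" where
  "exited_collective xc t r \<longleftrightarrow> xc r \<le> t"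

end

theory Submission
  imports Defs
begin

theorem lemma2:
  fixes R :: "'r set"
    and eb xb ec xc :: "'r \<Rightarrow> 't::linorder"
    and t :: 't
  assumes program_order:
      "\<forall>r\<in>R. happens_before (eb r) (xb r) \<and> \<not> happens_before (ec r) (xb r)
               \<and> happens_before (ec r) (xc r)"
    and barrier_axiom: "\<forall>A\<in>R. \<forall>B\<in>R. \<not> happens_before (xb A) (eb B)"
    and collective_axiom: "\<forall>A\<in>R. \<forall>B\<in>R. \<not> happens_before (xc A) (ec B)"
  shows
    "(\<exists>r\<in>R. in_collective xb xc t r \<and>
        (\<forall>s\<in>R. s \<noteq> r \<longrightarrow> in_collective xb xc t s \<or> exited_collective xc t s))
   \<or> (\<exists>r\<in>R. in_collective xb xc t r \<and>
        (\<forall>s\<in>R. \<not> exited_collective xc t s) \<and>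
        (\<forall>s\<in>R. s \<noteq> r \<longrightarrow> entered_barrier eb t s))
   \<or> (\<exists>r\<in>R. in_barrier eb xb t r \<and>
        (\<forall>s\<in>R. s \<noteq> r \<longrightarrow> \<not> exited_barrier xb t s))
   \<or> ((\<forall>s\<in>R. \<not> entered_barrier eb t s) \<or> (\<forall>s\<in>R. exited_collective xc t s))"
proof -
  have po: "\<And>r. r \<in> R \<Longrightarrow> eb r < xb r \<and> xb r \<le> ec r \<and> ec r < xc r"
    using program_order by (auto simp: happens_before_def not_less)
  have ba: "\<And>A B. A \<in> R \<Longrightarrow> B \<in> R \<Longrightarrow> eb B \<le> xb A"
    using barrier_axiom by (auto simp: happens_before_def not_less)
  have ca: "\<And>A B. A \<in> R \<Longrightarrow> B \<in> R \<Longrightarrow> ec B \<le> xc A"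
    using collective_axiom by (auto simp: happens_before_def not_less)
  show ?thesis
  proof (cases "\<exists>r\<in>R. xb r \<le> t \<and> t < xc r")
    case True
    then obtain r where r: "r \<in> R" "xb r \<le> t" "t < xc r" by blast
    show ?thesis
    proof (cases "\<exists>a\<in>R. xc a \<le> t")
      case True
      then obtain a where a: "a \<in> R" "xc a \<le> t" by blast
      have "\<forall>s\<in>R. xb s \<le> t"
        using po ca a by (meson order_trans)
      then have "\<forall>s\<in>R. s \<noteq> r \<longrightarrow> in_collective xb xc t s \<or> exited_collective xc t s"
        by (auto simp: in_collective_def exited_collective_def not_le)
      then show ?thesis using r by (auto simp: in_collective_def)
    next
      case False
      have "\<forall>s\<in>R. eb s \<le> t" using ba r by (meson order_trans)
      then show ?thesis using r False
        by (auto simp: in_collective_def exited_collective_def entered_barrier_def not_le)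
    qed
  next
    case False
    show ?thesis
    proof (cases "\<exists>a\<in>R. xc a \<le> t")
      case True
      then obtain a where a: "a \<in> R" "xc a \<le> t" by blast
      have "\<forall>s\<in>R. xb s \<le> t"
        using po ca a by (meson order_trans)
      then have "\<forall>s\<in>R. exited_collective xc t s"
        using False by (auto simp: exited_collective_def not_le)
      then show ?thesis by blast
    next
      case F2: False
      have nx: "\<forall>s\<in>R. t < xb s" using False F2 by (auto simp: not_le)
      show ?thesis
      proof (cases "\<exists>s\<in>R. eb s \<le> t")
        case True
        then obtain s where "s \<in> R" "eb s \<le> t" by blast
        then show ?thesis using nx
          by (auto simp: in_barrier_def exited_barrier_def not_le)
      next
        case False
        then show ?thesis by (auto simp: entered_barrier_def)
      qed
    qed
  qed
qed

end
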